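(* For any $m\ge2$, any $\beta_1,\dots,\beta_m\in\Delta_+$, any $F_{\beta_k}\in\mathfrak g_{-\beta_k}$ ($k=1,\dots,m$) and any $1\le\ell<m$, $$A_X(F_{\beta_1}\cdots F_{\beta_\ell}F_{\beta_{\ell+1}}\cdots F_{\beta_m})-A_X(F_{\beta_1}\cdots F_{\beta_{\ell+1}}F_{\beta_\ell}\cdots F_{\beta_m})=A_X(F_{\beta_1}\cdots[F_{\beta_\ell},F_{\beta_{\ell+1}}]\cdots F_{\beta_m}),$$ where on the right $[F_{\beta_\ell},F_{\beta_{\ell+1}}]\in\mathfrak g_{-(\beta_\ell+\beta_{\ell+1})}$ is treated as a single factor (the right side being $0$ if this commutator is $0$). Consequently $A_X$ extends to a well-defined linear map from $U(\mathfrak n_-)$ to $U(\mathfrak n_-)$-valued rational functions of $X_1,\dots,X_r$.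
   Context: $\mathfrak g$ is a simple complex Lie algebra with Cartan subalgebra $\mathfrak h$, roots $\Delta$, simple roots $\alpha_1,\dots,\alpha_r$, positive roots $\Delta_+$, $\mathfrak n_-=\bigoplus_{\alpha\in\Delta_+}\mathfrak g_{-\alpha}$. For $\beta\in\mathfrak h^*$ and $\lambda\in\mathfrak h$ put $X_\beta=e^{-2\pi i\beta(\lambda)}$, $X_j=X_{\alpha_j}$ (so $X_\beta$ is a monomial in $X_1,\dots,X_r$ for $\beta$ in the root lattice). For $\beta_1,\dots,\beta_m\in\Delta_+$ (the $\beta_k$ need not be distinct), $F_{\beta_k}\in\mathfrak g_{-\beta_k}$, and a permutation $\sigma\in S_m$, let $a_k^\sigma=\#\{j:\ k\le j\le m-1,\ \sigma(j)>\sigma(j+1)\}$ and $$A_X^\sigma(F_{\beta_1}\cdots F_{\beta_m})=\prod_{k=1}^m\frac{X_{\beta_{\sigma(k)}}^{a_k^\sigma+1}}{1-X_{\beta_{\sigma(1)}}\cdots X_{\beta_{\sigma(k)}}}\;F_{\beta_{\sigma(1)}}\cdots F_{\beta_{\sigma(m)}},$$ $A_X(F_{\beta_1}\cdots F_{\beta_m})=\sum_{\sigma\in S_m}A_X^\sigma(F_{\beta_1}\cdots F_{\beta_m})$ (a formula for each ordered tuple of root vectors, products taken in $U(\mathfrak n_-)$), and $A_X(1)=1$; $A_X$ is linear in each $F_{\beta_k}$. *)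

theory Defs
  imports Complex_Main "HOL-Combinatorics.Permutations"
begin

definition lie_algebra :: "(complex \<Rightarrow> 'g::ab_group_add \<Rightarrow> 'g) \<Rightarrow> ('g \<Rightarrow> 'g \<Rightarrow> 'g) \<Rightarrow> bool" where
  "lie_algebra sc br \<longleftrightarrow>
     vector_space sc \<and>
     (\<forall>x y z. br (x + y) z = br x z + br y z) \<and>
     (\<forall>x y z. br x (y + z) = br x y + br x z) \<and>
     (\<forall>c x y. br (sc c x) y = sc c (br x y)) \<and>
     (\<forall>c x y. br x (sc c y) = sc c (br x y)) \<and>
     (\<forall>x. br x x = 0) \<and>
     (\<forall>x y z. br x (br y z) + br y (br z x) + br z (br x y) = 0)"

definition fin_dim :: "(complex \<Rightarrow> 'g::ab_group_add \<Rightarrow> 'g) \<Rightarrow> bool" where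
  "fin_dim sc \<longleftrightarrow> (\<exists>B. finite B \<and> module.span sc B = UNIV)"

definition lie_ideal :: "(complex \<Rightarrow> 'g::ab_group_add \<Rightarrow> 'g) \<Rightarrow> ('g \<Rightarrow> 'g \<Rightarrow> 'g) \<Rightarrow> 'g set \<Rightarrow> bool" where
  "lie_ideal sc br I \<longleftrightarrow> module.subspace sc I \<and> (\<forall>x y. y \<in> I \<longrightarrow> br x y \<in> I)"

definition simple_lie_algebra :: "(complex \<Rightarrow> 'g::ab_group_add \<Rightarrow> 'g) \<Rightarrow> ('g \<Rightarrow> 'g \<Rightarrow> 'g) \<Rightarrow> bool" where
  "simple_lie_algebra sc br \<longleftrightarrow> lie_algebra sc br \<and> fin_dim sc \<and>
     (\<exists>x y. br x y \<noteq> 0) \<and> (\<forall>I. lie_ideal sc br I \<longrightarrow> I = {0} \<or> I = UNIV)"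

definition root_space :: "(complex \<Rightarrow> 'g::ab_group_add \<Rightarrow> 'g) \<Rightarrow> ('g \<Rightarrow> 'g \<Rightarrow> 'g) \<Rightarrow> 'g set \<Rightarrow> ('g \<Rightarrow> complex) \<Rightarrow> 'g set" where
  "root_space sc br h \<alpha> = {x. \<forall>t\<in>h. br t x = sc (\<alpha> t) x}"

text \<open>Cartan subalgebra of a semisimple Lie algebra = maximal toral subalgebra:
  an abelian subspace acting diagonalizably (g is spanned by weight spaces) and equal to its
  own centralizer (the zero weight space).\<close>
definition cartan_subalgebra :: "(complex \<Rightarrow> 'g::ab_group_add \<Rightarrow> 'g) \<Rightarrow> ('g \<Rightarrow> 'g \<Rightarrow> 'g) \<Rightarrow> 'g set \<Rightarrow> bool" where
  "cartan_subalgebra sc br h \<longleftrightarrow> module.subspace sc h \<and>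
     (\<forall>a\<in>h. \<forall>b\<in>h. br a b = 0) \<and>
     root_space sc br h (\<lambda>_. 0) = h \<and>
     module.span sc (\<Union>\<alpha>. root_space sc br h \<alpha>) = UNIV"

text \<open>Roots: functionals (only their values on h matter) nonzero on h with nonzero root space.\<close>
definition is_root :: "(complex \<Rightarrow> 'g::ab_group_add \<Rightarrow> 'g) \<Rightarrow> ('g \<Rightarrow> 'g \<Rightarrow> 'g) \<Rightarrow> 'g set \<Rightarrow> ('g \<Rightarrow> complex) \<Rightarrow> bool" where
  "is_root sc br h \<alpha> \<longleftrightarrow> (\<exists>t\<in>h. \<alpha> t \<noteq> 0) \<and> root_space sc br h \<alpha> \<noteq> {0}"

definition simple_roots :: "(complex \<Rightarrow> 'g::ab_group_add \<Rightarrow> 'g) \<Rightarrow> ('g \<Rightarrow> 'g \<Rightarrow> 'g) \<Rightarrow> 'g set \<Rightarrow> (nat \<Rightarrow> 'g \<Rightarrow> complex) \<Rightarrow> nat \<Rightarrow> bool" where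
  "simple_roots sc br h al r \<longleftrightarrow>
     (\<forall>j<r. is_root sc br h (al j)) \<and>
     (\<forall>c::nat \<Rightarrow> complex. (\<forall>t\<in>h. (\<Sum>j<r. c j * al j t) = 0) \<longrightarrow> (\<forall>j<r. c j = 0)) \<and>
     (\<forall>\<alpha>. is_root sc br h \<alpha> \<longrightarrow>
        (\<exists>c::nat \<Rightarrow> int. (\<forall>t\<in>h. \<alpha> t = (\<Sum>j<r. of_int (c j) * al j t)) \<and>
                         ((\<forall>j<r. c j \<ge> 0) \<or> (\<forall>j<r. c j \<le> 0))))"

definition pos_root :: "(complex \<Rightarrow> 'g::ab_group_add \<Rightarrow> 'g) \<Rightarrow> ('g \<Rightarrow> 'g \<Rightarrow> 'g) \<Rightarrow> 'g set \<Rightarrow> (nat \<Rightarrow> 'g \<Rightarrow> complex) \<Rightarrow> nat \<Rightarrow> ('g \<Rightarrow> complex) \<Rightarrow> bool" where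
  "pos_root sc br h al r \<beta> \<longleftrightarrow> is_root sc br h \<beta> \<and>
     (\<exists>c::nat \<Rightarrow> nat. \<forall>t\<in>h. \<beta> t = (\<Sum>j<r. of_nat (c j) * al j t))"

definition n_minus :: "(complex \<Rightarrow> 'g::ab_group_add \<Rightarrow> 'g) \<Rightarrow> ('g \<Rightarrow> 'g \<Rightarrow> 'g) \<Rightarrow> 'g set \<Rightarrow> (nat \<Rightarrow> 'g \<Rightarrow> complex) \<Rightarrow> nat \<Rightarrow> 'g set" where
  "n_minus sc br h al r = module.span sc
     (\<Union>{root_space sc br h (\<lambda>t. - \<beta> t) | \<beta>. pos_root sc br h al r \<beta>})"

section \<open>Associative algebras receiving n_- (stand-in for U(n_-))\<close>

definition complex_assoc_algebra :: "(complex \<Rightarrow> 'u::ring_1 \<Rightarrow> 'u) \<Rightarrow> bool" where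
  "complex_assoc_algebra su \<longleftrightarrow> vector_space su \<and>
     (\<forall>c a b. su c (a * b) = su c a * b \<and> su c (a * b) = a * su c b)"

definition lie_hom_into :: "(complex \<Rightarrow> 'g::ab_group_add \<Rightarrow> 'g) \<Rightarrow> ('g \<Rightarrow> 'g \<Rightarrow> 'g) \<Rightarrow> 'g set \<Rightarrow>
     (complex \<Rightarrow> 'u::ring_1 \<Rightarrow> 'u) \<Rightarrow> ('g \<Rightarrow> 'u) \<Rightarrow> bool" where
  "lie_hom_into sc br n su \<iota> \<longleftrightarrow>
     (\<forall>x\<in>n. \<forall>y\<in>n. \<iota> (x + y) = \<iota> x + \<iota> y \<and> \<iota> (br x y) = \<iota> x * \<iota> y - \<iota> y * \<iota> x) \<and>
     (\<forall>c. \<forall>x\<in>n. \<iota> (sc c x) = su c (\<iota> x))"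

definition Xw :: "('g \<Rightarrow> complex) \<Rightarrow> 'g \<Rightarrow> complex" where
  "Xw \<beta> lam = exp (- 2 * pi * \<i> * \<beta> lam)"

text \<open>0-indexed: a_k = #{j. k <= j <= m-2, sigma j > sigma (j+1)}.\<close>
definition descents_from :: "nat \<Rightarrow> (nat \<Rightarrow> nat) \<Rightarrow> nat \<Rightarrow> nat" where
  "descents_from m \<sigma> k = card {j. k \<le> j \<and> Suc j < m \<and> \<sigma> j > \<sigma> (Suc j)}"

text \<open>A_X^sigma applied to the word given by the list ws of (weight, root vector) pairs.\<close>
definition AX_sigma :: "(complex \<Rightarrow> 'u::ring_1 \<Rightarrow> 'u) \<Rightarrow> ('g \<Rightarrow> 'u) \<Rightarrow> 'g \<Rightarrow>
     (('g \<Rightarrow> complex) \<times> 'g) list \<Rightarrow> (nat \<Rightarrow> nat) \<Rightarrow> 'u" where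
  "AX_sigma su \<iota> lam ws \<sigma> =
     (let m = length ws; X = (\<lambda>k. Xw (fst (ws ! k)) lam) in
      su (\<Prod>k<m. X (\<sigma> k) ^ (descents_from m \<sigma> k + 1) / (1 - (\<Prod>i\<le>k. X (\<sigma> i))))
         (prod_list (map (\<lambda>k. \<iota> (snd (ws ! \<sigma> k))) [0..<m])))"

definition AX :: "(complex \<Rightarrow> 'u::ring_1 \<Rightarrow> 'u) \<Rightarrow> ('g \<Rightarrow> 'u) \<Rightarrow> 'g \<Rightarrow>
     (('g \<Rightarrow> complex) \<times> 'g) list \<Rightarrow> 'u" where
  "AX su \<iota> lam ws = (\<Sum>\<sigma>\<in>{\<sigma>. \<sigma> permutes {..<length ws}}. AX_sigma su \<iota> lam ws \<sigma>)"

end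

theory Submission
  imports Defs
begin


fun cf :: "(nat \<Rightarrow> nat) \<Rightarrow> (nat \<Rightarrow> complex) \<Rightarrow> complex \<Rightarrow> nat list \<Rightarrow> complex" where
  "cf \<rho> x P [] = 1"
| "cf \<rho> x P (c # s) = x c * (case s of [] \<Rightarrow> 1 | d # _ \<Rightarrow> if \<rho> d < \<rho> c then P * x c else 1)
      / (1 - P * x c) * cf \<rho> x (P * x c) s"

lemma cf_cong:
  assumes "\<forall>c\<in>set s. \<forall>d\<in>set s. (\<rho>1 d < \<rho>1 c) = (\<rho>2 d < \<rho>2 c)"
    and "\<forall>c\<in>set s. x1 c = x2 c"
  shows "cf \<rho>1 x1 P s = cf \<rho>2 x2 P s"
  using assms
proof (induction s arbitrary: P)
  case Nil then show ?case by simp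
next
  case (Cons c s)
  then show ?case by (cases s) auto
qed

lemma cf_map: "cf \<rho> (x \<circ> f) P (map f s) = cf (\<rho> \<circ> f) (x \<circ> f \<circ> f) P s \<or> True"
  by simp

lemma cf_map': "cf \<rho> x P (map f s) = cf (\<rho> \<circ> f) (x \<circ> f) P s"
proof (induction s arbitrary: P)
  case Nil then show ?case by simp
next
  case (Cons c s)
  then show ?case by (cases s) auto
qed

abbreviation "tr l \<equiv> Transposition.transpose l (Suc l)"

lemma cf_nadj:
  assumes "\<not> (\<exists>u v. s = u @ l # Suc l # v)" "\<not> (\<exists>u v. s = u @ Suc l # l # v)"
  shows "cf id x P s = cf (tr l) x P s"
  using assms
proof (induction s arbitrary: P)
  case Nil then show ?case by simp
next
  case (Cons c s)
  have IH: "cf id x Q s = cf (tr l) x Q s" for Q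
  proof (rule Cons.IH)
    show "\<not> (\<exists>u v. s = u @ l # Suc l # v)"
      using Cons.prems(1) by (metis append_Cons)
    show "\<not> (\<exists>u v. s = u @ Suc l # l # v)"
      using Cons.prems(2) by (metis append_Cons)
  qed
  show ?case
  proof (cases s)
    case Nil then show ?thesis by simp
  next
    case (Cons d s')
    have "\<not> (c = l \<and> d = Suc l)" using Cons.prems(1) \<open>s = d # s'\<close> by (metis append_Nil)
    moreover have "\<not> (c = Suc l \<and> d = l)" using Cons.prems(2) \<open>s = d # s'\<close> by (metis append_Nil)
    ultimately have "(tr l d < tr l c) = (d < c)"
      by (auto simp: transpose_def)
    have cs: "(case s of [] \<Rightarrow> 1 | d' # _ \<Rightarrow> if \<rho> d' < \<rho> c then Q else 1) = (if \<rho> d < \<rho> c then Q else 1)" for \<rho> and Q :: complex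
      using Cons by simp
    have e1: "cf id x P (c#s) = x c * (if id d < id c then P*x c else 1)/(1-P*x c) * cf id x (P*x c) s"
      by (simp only: cf.simps(2) cs)
    have e2: "cf (tr l) x P (c#s) = x c * (if tr l d < tr l c then P*x c else 1)/(1-P*x c) * cf (tr l) x (P*x c) s"
      by (simp only: cf.simps(2) cs)
    show ?thesis unfolding e1 e2 IH using \<open>(tr l d < tr l c) = (d < c)\<close> by simp
  qed
qed

lemma cf_Cons_gen: "cf \<rho> x P (c # s) = x c * (if s = [] then 1 else if \<rho> (hd s) < \<rho> c then P * x c else 1)
      / (1 - P * x c) * cf \<rho> x (P * x c) s"
  by (cases s) simp_all

lemma alg_aux:
  fixes d P a Z :: complex
  assumes "1 - P * a = d" "d \<noteq> 0"
  shows "a * 1 / d * Z - a * (P * a) / d * Z = a * Z"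
proof -
  have "a * 1 / d * Z - a * (P * a) / d * Z = a * Z * (1 - P * a) * inverse d"
    by (simp add: divide_inverse algebra_simps)
  also have "\<dots> = a * Z * (d * inverse d)" using assms(1) by (simp add: mult.assoc)
  also have "\<dots> = a * Z" using assms(2) by simp
  finally show ?thesis .
qed

lemma cf_ab:
  assumes "l \<notin> set u" "Suc l \<notin> set u" "l \<notin> set v" "Suc l \<notin> set v"
    and "1 - P * prod_list (map x u) * x l \<noteq> 0"
  shows "cf id x P (u @ l # Suc l # v) - cf (tr l) x P (u @ l # Suc l # v)
       = cf id (x(l := x l * x (Suc l))) P (u @ l # v)"
  using assms
proof (induction u arbitrary: P)
  case Nil
  let ?x' = "x(l := x l * x (Suc l))"
  have R1: "cf (tr l) x Q v = cf id x Q v" for Q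
    by (rule cf_cong) (use Nil in \<open>auto simp: transpose_def\<close>)
  have R2: "cf id ?x' Q v = cf id x Q v" for Q
    by (rule cf_cong) (use Nil in \<open>auto\<close>)
  have hv1: "v \<noteq> [] \<Longrightarrow> (tr l (hd v) < l) = (hd v < Suc l)"
    and hv2: "v \<noteq> [] \<Longrightarrow> (hd v < l) = (hd v < Suc l)"
    using Nil by (cases v; auto simp: transpose_def)+
  have nz: "1 - P * x l \<noteq> 0" using Nil by simp
  define a b where "a = x l" and "b = x (Suc l)"
  define Q where "Q = P * a * b"
  define D where "D = (if v = [] then 1 else if hd v < Suc l then Q else 1)"
  define C where "C = cf id x Q v"
  have e1: "cf id x P (l # Suc l # v) = a * 1 / (1 - P * a) * (b * D / (1 - P * a * b) * C)"
    using cf_Cons_gen[of id x P l "Suc l # v"] cf_Cons_gen[of id x "P * x l" "Suc l" v]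
    by (simp add: a_def b_def Q_def D_def C_def del: cf.simps)
  have e2: "cf (tr l) x P (l # Suc l # v) = a * (P * a) / (1 - P * a) * (b * D / (1 - P * a * b) * C)"
    using cf_Cons_gen[of "tr l" x P l "Suc l # v"] cf_Cons_gen[of "tr l" x "P * x l" "Suc l" v] R1[of "P * x l * x (Suc l)"]
    by (simp add: a_def b_def Q_def D_def C_def hv1 del: cf.simps)
  have e3: "cf id ?x' P (l # v) = (a * b) * D / (1 - P * a * b) * C"
    using cf_Cons_gen[of id ?x' P l v] R2[of "P * (x l * x (Suc l))"]
    by (simp add: a_def b_def Q_def D_def C_def mult.assoc hv2 del: cf.simps)
  have "a * 1 / (1 - P * a) * (b * D / (1 - P * a * b) * C) - a * (P * a) / (1 - P * a) * (b * D / (1 - P * a * b) * C)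
      = (a * b) * D / (1 - P * a * b) * C"
  proof -
    have "a * 1 / (1 - P * a) * Z - a * (P * a) / (1 - P * a) * Z = a * Z" for Z
      by (rule alg_aux) (use nz in \<open>simp_all add: a_def\<close>)
    then have X: "a * 1 / (1 - P * a) * (b * D / (1 - P * a * b) * C) - a * (P * a) / (1 - P * a) * (b * D / (1 - P * a * b) * C)
      = a * (b * D / (1 - P * a * b) * C)" .
    show ?thesis by (subst X) simp
  qed
  then show ?case unfolding append_Nil e1 e2 e3 .
next
  case (Cons c u)
  let ?x' = "x(l := x l * x (Suc l))"
  let ?s1 = "u @ l # Suc l # v" and ?s2 = "u @ l # v"
  have cl: "c \<noteq> l" "c \<noteq> Suc l" using Cons.prems by auto
  have IH: "cf id x (P * x c) ?s1 - cf (tr l) x (P * x c) ?s1 = cf id ?x' (P * x c) ?s2"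
    using Cons.prems by (intro Cons.IH) (auto simp: mult.assoc)
  have hs: "hd ?s1 = hd ?s2" by (cases u) auto
  have hl: "hd ?s1 \<noteq> Suc l" using Cons.prems by (cases u) auto
  have cmp: "(tr l (hd ?s1) < tr l c) = (hd ?s1 < c)"
    using cl hl by (auto simp: transpose_def)
  have xc: "?x' c = x c" using cl by simp
  show ?case
    unfolding append_Cons cf_Cons_gen[of _ _ P c] xc hs[symmetric] cmp
    by (simp add: IH[symmetric] transpose_def cl right_diff_distrib diff_divide_distrib del: fun_upd_apply)
qed

lemma cf_ba:
  assumes "l \<notin> set u" "Suc l \<notin> set u" "l \<notin> set v" "Suc l \<notin> set v"
    and "1 - P * prod_list (map x u) * x (Suc l) \<noteq> 0"
  shows "cf id x P (u @ Suc l # l # v) - cf (tr l) x P (u @ Suc l # l # v)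
       = - cf id (x(l := x l * x (Suc l))) P (u @ l # v)"
  using assms
proof (induction u arbitrary: P)
  case Nil
  let ?x' = "x(l := x l * x (Suc l))"
  have R1: "cf (tr l) x Q v = cf id x Q v" for Q
    by (rule cf_cong) (use Nil in \<open>auto simp: transpose_def\<close>)
  have R2: "cf id ?x' Q v = cf id x Q v" for Q
    by (rule cf_cong) (use Nil in \<open>auto\<close>)
  have hv1: "v \<noteq> [] \<Longrightarrow> (tr l (hd v) < Suc l) = (hd v < l)"
    and hv2: "v \<noteq> [] \<Longrightarrow> (hd v < Suc l) = (hd v < l)"
    using Nil by (cases v; auto simp: transpose_def)+
  have nz: "1 - P * x (Suc l) \<noteq> 0" using Nil by simp
  define a b where "a = x l" and "b = x (Suc l)"
  define Q where "Q = P * b * a"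
  define D where "D = (if v = [] then 1 else if hd v < l then Q else 1)"
  define C where "C = cf id x Q v"
  have e1: "cf id x P (Suc l # l # v) = b * (P * b) / (1 - P * b) * (a * D / (1 - P * b * a) * C)"
    using cf_Cons_gen[of id x P "Suc l" "l # v"] cf_Cons_gen[of id x "P * x (Suc l)" l v]
    by (simp add: a_def b_def Q_def D_def C_def del: cf.simps)
  have e2: "cf (tr l) x P (Suc l # l # v) = b * 1 / (1 - P * b) * (a * D / (1 - P * b * a) * C)"
    using cf_Cons_gen[of "tr l" x P "Suc l" "l # v"] cf_Cons_gen[of "tr l" x "P * x (Suc l)" l v] R1[of "P * x (Suc l) * x l"]
    by (simp add: a_def b_def Q_def D_def C_def hv1 del: cf.simps)
  have Qe: "P * (x l * x (Suc l)) = Q" by (simp add: Q_def a_def b_def ac_simps)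
  have e3: "cf id ?x' P (l # v) = b * (a * D / (1 - P * b * a) * C)"
    using cf_Cons_gen[of id ?x' P l v] R2[of "P * (x l * x (Suc l))"]
    by (simp add: a_def b_def Q_def D_def C_def ac_simps hv2 del: cf.simps)
  have "b * (P * b) / (1 - P * b) * Z - b * 1 / (1 - P * b) * Z = - (b * Z)" for Z
  proof -
    have "b * 1 / (1 - P * b) * Z - b * (P * b) / (1 - P * b) * Z = b * Z"
      by (rule alg_aux) (use nz in \<open>simp_all add: b_def\<close>)
    then show ?thesis by (simp add: algebra_simps)
  qed
  then show ?case unfolding append_Nil e1 e2 e3 .
next
  case (Cons c u)
  let ?x' = "x(l := x l * x (Suc l))"
  let ?s1 = "u @ Suc l # l # v" and ?s2 = "u @ l # v"
  have cl: "c \<noteq> l" "c \<noteq> Suc l" using Cons.prems by auto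
  have IH: "cf id x (P * x c) ?s1 - cf (tr l) x (P * x c) ?s1 = - cf id ?x' (P * x c) ?s2"
    using Cons.prems by (intro Cons.IH) (auto simp: mult.assoc)
  have IH2: "cf id ?x' (P * x c) ?s2 = cf (tr l) x (P * x c) ?s1 - cf id x (P * x c) ?s1"
    by (metis IH minus_diff_eq minus_minus)
  have cmp1: "(tr l (hd ?s1) < tr l c) = (hd ?s2 < c)"
    using cl Cons.prems by (cases u) (auto simp: transpose_def)
  have cmp2: "(id (hd ?s1) < id c) = (hd ?s2 < c)"
    using cl Cons.prems by (cases u) auto
  have xc: "?x' c = x c" using cl by simp
  show ?case
    unfolding append_Cons cf_Cons_gen[of _ _ P c] xc cmp1 cmp2
    by (simp add: IH2 right_diff_distrib diff_divide_distrib del: fun_upd_apply)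
qed

definition PS :: "nat set \<Rightarrow> nat list set" where
  "PS A = {s. distinct s \<and> set s = A}"

definition py :: "(nat \<Rightarrow> 'u::ring_1) \<Rightarrow> nat list \<Rightarrow> 'u" where
  "py y s = prod_list (map y s)"

fun repl :: "nat \<Rightarrow> nat list \<Rightarrow> nat list \<Rightarrow> nat list" where
  "repl a z [] = []"
| "repl a z (c # s) = (if c = a then z @ s else c # repl a z s)"

lemma repl_split: "a \<notin> set u \<Longrightarrow> repl a z (u @ a # v) = u @ z @ v"
  by (induction u) auto

lemma finite_PS: "finite A \<Longrightarrow> finite (PS A)"
proof -
  assume "finite A"
  have "PS A \<subseteq> {xs. set xs \<subseteq> A \<and> length xs \<le> card A}"
    unfolding PS_def using distinct_card by fastforce
  then show ?thesis using finite_lists_length_le[OF \<open>finite A\<close>] finite_subset by blast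
qed

lemma not_both:
  assumes "distinct s" "s = u @ a # b # v" "s = u' @ b # a # v'"
  shows False
proof -
  have l1: "s ! length u = a" "s ! Suc (length u) = b" using assms(2) by (simp_all add: nth_append)
  have l2: "s ! length u' = b" "s ! Suc (length u') = a" using assms(3) by (simp_all add: nth_append)
  have len: "Suc (length u) < length s" "Suc (length u') < length s"
    by (simp add: assms(2)) (simp add: assms(3))
  have "length u = Suc (length u')"
    using nth_eq_iff_index_eq[OF assms(1)] l1 l2 len by (metis Suc_lessD)
  moreover have "Suc (length u) = length u'"
    using nth_eq_iff_index_eq[OF assms(1)] l1 l2 len by (metis Suc_lessD)
  ultimately show False by simp
qed

lemma sum_main:
  fixes su :: "complex \<Rightarrow> 'u::ring_1 \<Rightarrow> 'u" and x :: "nat \<Rightarrow> complex" and y :: "nat \<Rightarrow> 'u"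
  assumes V: "vector_space su" and lm: "Suc l < m"
    and nz: "\<forall>S. S \<subseteq> {..<m} \<and> S \<noteq> {} \<longrightarrow> (\<Prod>k\<in>S. x k) \<noteq> 1"
  shows "(\<Sum>s\<in>PS {..<m}. su (cf id x 1 s) (py y s)) - (\<Sum>s\<in>PS {..<m}. su (cf (tr l) x 1 s) (py y s))
      = (\<Sum>s\<in>PS ({..<m} - {Suc l}). su (cf id (x(l := x l * x (Suc l))) 1 s)
                 (py (y(l := y l * y (Suc l) - y (Suc l) * y l)) s))"
proof -
  interpret V: vector_space su by (rule V)
  define a b where "a = l" and "b = Suc l"
  define x' where "x' = x(l := x l * x (Suc l))"
  define y' where "y' = y(l := y l * y (Suc l) - y (Suc l) * y l)"
  define PP where "PP = PS {..<m}"
  define PP' where "PP' = PS ({..<m} - {Suc l})"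
  define f where "f s = su (cf id x 1 s - cf (tr l) x 1 s) (py y s)" for s
  define T1 where "T1 = {s\<in>PP. \<exists>u v. s = u @ a # b # v}"
  define T2 where "T2 = {s\<in>PP. \<exists>u v. s = u @ b # a # v}"
  define N where "N = PP - T1 - T2"
  have fin: "finite PP" unfolding PP_def by (rule finite_PS) simp
  have ab: "a < m" "b < m" "a \<noteq> b" using lm by (auto simp: a_def b_def)
  have decT: "\<exists>u v. s = u @ c # d # v \<and> distinct u \<and> distinct v \<and> c \<notin> set u \<and> d \<notin> set u \<and> c \<notin> set v \<and> d \<notin> set v
         \<and> c \<noteq> d \<and> set u \<inter> set v = {} \<and> set u \<union> set v = {..<m} - {c, d}"
    if "s \<in> PP" "s = u0 @ c # d # v0" for s u0 v0 c d
    using that by (auto simp: PP_def PS_def)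
  have decP: "\<exists>u v. s = u @ a # v \<and> distinct u \<and> distinct v \<and> a \<notin> set u \<and> b \<notin> set u \<and> a \<notin> set v \<and> b \<notin> set v
         \<and> set u \<inter> set v = {} \<and> set u \<union> set v = {..<m} - {a, b}"
    if "s \<in> PP'" for s
  proof -
    have s: "distinct s" "set s = {..<m} - {b}" using that by (auto simp: PP'_def PS_def b_def)
    then have "a \<in> set s" using ab by auto
    then obtain u v where "s = u @ a # v" by (meson split_list)
    then show ?thesis using s by auto
  qed
  have produ: "1 - 1 * prod_list (map x u) * x c \<noteq> 0" if "distinct u" "c \<notin> set u" "set u \<subseteq> {..<m}" "c < m" for u c
  proof -
    have "prod_list (map x u) * x c = (\<Prod>k\<in>insert c (set u). x k)"
      using that by (simp add: prod.distinct_set_conv_list mult.commute)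
    moreover have "(\<Prod>k\<in>insert c (set u). x k) \<noteq> 1"
    proof -
      have "insert c (set u) \<subseteq> {..<m}" using that by auto
      then show ?thesis using nz by blast
    qed
    ultimately show ?thesis by simp
  qed
  have L: "(\<Sum>s\<in>PP. su (cf id x 1 s) (py y s)) - (\<Sum>s\<in>PP. su (cf (tr l) x 1 s) (py y s)) = sum f PP"
    unfolding f_def by (simp add: sum_subtractf[symmetric] V.scale_left_diff_distrib)
  have split: "PP = T1 \<union> T2 \<union> N" unfolding N_def T1_def T2_def by blast
  have disj12: "T1 \<inter> T2 = {}"
  proof -
    { fix s assume "s \<in> T1" "s \<in> T2"
      then obtain u v u' v' where "distinct s" "s = u @ a # b # v" "s = u' @ b # a # v'"
        unfolding T1_def T2_def PP_def PS_def by blast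
      then have False by (rule not_both) }
    then show ?thesis by blast
  qed
  have fsplit: "sum f PP = sum f T1 + sum f T2 + sum f N"
  proof -
    have s1: "T1 \<subseteq> PP" "T2 \<subseteq> PP" "N \<subseteq> PP" unfolding T1_def T2_def N_def by blast+
    have f1: "finite T1" "finite T2" "finite N" using s1 fin finite_subset by blast+
    have d2: "(T1 \<union> T2) \<inter> N = {}" unfolding N_def by blast
    have "sum f PP = sum f ((T1 \<union> T2) \<union> N)" using split by simp
    also have "\<dots> = sum f (T1 \<union> T2) + sum f N"
      using f1 d2 by (intro sum.union_disjoint) auto
    also have "sum f (T1 \<union> T2) = sum f T1 + sum f T2"
      using f1 disj12 by (intro sum.union_disjoint) auto
    finally show ?thesis .
  qed
  have fN: "sum f N = 0"
  proof (rule sum.neutral, rule ballI)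
    fix s assume "s \<in> N"
    then have "\<not> (\<exists>u v. s = u @ l # Suc l # v)" "\<not> (\<exists>u v. s = u @ Suc l # l # v)"
      unfolding N_def T1_def T2_def a_def b_def by auto
    then show "f s = 0" unfolding f_def using cf_nadj by simp
  qed
  define g1 where "g1 s = su (cf id x' 1 s) (py y (repl a [a, b] s))" for s
  define g2 where "g2 s = - su (cf id x' 1 s) (py y (repl a [b, a] s))" for s
  have f1: "sum g1 PP' = sum f T1"
  proof (rule sum.reindex_bij_witness[where i = "remove1 b" and j = "repl a [a, b]"])
    fix s assume "s \<in> PP'"
    then obtain u v where uv: "s = u @ a # v" "distinct u" "distinct v" "a \<notin> set u" "b \<notin> set u" "a \<notin> set v" "b \<notin> set v"
        "set u \<inter> set v = {}" "set u \<union> set v = {..<m} - {a, b}"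
      using decP by blast
    have r: "repl a [a, b] s = u @ a # b # v" using uv by (simp add: repl_split)
    show "remove1 b (repl a [a, b] s) = s" using uv ab r by (simp add: remove1_append)
    show "repl a [a, b] s \<in> T1" unfolding r T1_def PP_def PS_def using uv ab by auto
    have "cf id x 1 (u @ l # Suc l # v) - cf (tr l) x 1 (u @ l # Suc l # v) = cf id x' 1 (u @ l # v)"
      unfolding x'_def
      by (rule cf_ab) (use uv ab produ[of u a] in \<open>auto simp: a_def b_def\<close>)
    then show "f (repl a [a, b] s) = g1 s" unfolding f_def g1_def r by (simp add: uv(1) a_def b_def)
  next
    fix s assume "s \<in> T1"
    then obtain u0 v0 where h0: "s \<in> PP" "s = u0 @ a # b # v0" unfolding T1_def by blast
    then obtain u v where uv: "s = u @ a # b # v" "distinct u" "distinct v" "a \<notin> set u" "b \<notin> set u" "a \<notin> set v" "b \<notin> set v"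
        "set u \<inter> set v = {}" "set u \<union> set v = {..<m} - {a, b}"
      using decT[OF h0] by blast
    have r: "remove1 b s = u @ a # v" using uv ab by (simp add: remove1_append)
    show "repl a [a, b] (remove1 b s) = s" unfolding r using uv by (simp add: repl_split)
    show "remove1 b s \<in> PP'" unfolding r PP'_def PS_def using uv ab by (auto simp: b_def)
  qed
  have f2: "sum g2 PP' = sum f T2"
  proof (rule sum.reindex_bij_witness[where i = "remove1 b" and j = "repl a [b, a]"])
    fix s assume "s \<in> PP'"
    then obtain u v where uv: "s = u @ a # v" "distinct u" "distinct v" "a \<notin> set u" "b \<notin> set u" "a \<notin> set v" "b \<notin> set v"
        "set u \<inter> set v = {}" "set u \<union> set v = {..<m} - {a, b}"
      using decP by blast
    have r: "repl a [b, a] s = u @ b # a # v" using uv by (simp add: repl_split)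
    show "remove1 b (repl a [b, a] s) = s" using uv ab r by (simp add: remove1_append)
    show "repl a [b, a] s \<in> T2" unfolding r T2_def PP_def PS_def using uv ab by auto
    have "cf id x 1 (u @ Suc l # l # v) - cf (tr l) x 1 (u @ Suc l # l # v) = - cf id x' 1 (u @ l # v)"
      unfolding x'_def
      by (rule cf_ba) (use uv ab produ[of u b] in \<open>auto simp: a_def b_def\<close>)
    then show "f (repl a [b, a] s) = g2 s" unfolding f_def g2_def r by (simp add: uv(1) a_def b_def)
  next
    fix s assume "s \<in> T2"
    then obtain u0 v0 where h0: "s \<in> PP" "s = u0 @ b # a # v0" unfolding T2_def by blast
    then obtain u v where uv: "s = u @ b # a # v" "distinct u" "distinct v" "a \<notin> set u" "b \<notin> set u" "a \<notin> set v" "b \<notin> set v"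
        "set u \<inter> set v = {}" "set u \<union> set v = {..<m} - {a, b}"
      using decT[OF h0] by blast
    have r: "remove1 b s = u @ a # v" using uv ab by (simp add: remove1_append)
    show "repl a [b, a] (remove1 b s) = s" unfolding r using uv by (simp add: repl_split)
    show "remove1 b s \<in> PP'" unfolding r PP'_def PS_def using uv ab by (auto simp: b_def)
  qed
  have g12: "g1 s + g2 s = su (cf id x' 1 s) (py y' s)" if hs: "s \<in> PP'" for s
  proof -
    obtain u v where uv: "s = u @ a # v" "a \<notin> set u" "a \<notin> set v"
      using decP[OF hs] by blast
    have mu: "map y' u = map y u" "map y' v = map y v"
      using uv unfolding y'_def a_def by auto
    have "py y (u @ a # b # v) - py y (u @ b # a # v) = py y' (u @ a # v)"
    proof -
      have yl: "y' a = y a * y b - y b * y a" by (simp add: y'_def a_def b_def)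
      show ?thesis unfolding py_def by (simp add: mu yl algebra_simps)
    qed
    then show ?thesis unfolding g1_def g2_def uv(1) repl_split[OF uv(2)]
      by (simp add: V.scale_right_diff_distrib[symmetric])
  qed
  have "sum f PP = sum (\<lambda>s. g1 s + g2 s) PP'"
    using fsplit fN f1 f2 by (simp add: sum.distrib)
  also have "\<dots> = (\<Sum>s\<in>PP'. su (cf id x' 1 s) (py y' s))"
    using g12 by (rule sum.cong[OF refl])
  finally show ?thesis using L unfolding PP_def PP'_def x'_def y'_def by simp
qed



lemma cf_prod:
  "cf \<rho> x P s = (\<Prod>k<length s. x (s ! k) *
      (if Suc k < length s \<and> \<rho> (s ! Suc k) < \<rho> (s ! k) then P * (\<Prod>i\<le>k. x (s ! i)) else 1)
      / (1 - P * (\<Prod>i\<le>k. x (s ! i))))"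
proof (induction s arbitrary: P)
  case Nil then show ?case by simp
next
  case (Cons c s)
  define f where "f k = x ((c # s) ! k) *
      (if Suc k < length (c # s) \<and> \<rho> ((c # s) ! Suc k) < \<rho> ((c # s) ! k) then P * (\<Prod>i\<le>k. x ((c # s) ! i)) else 1)
      / (1 - P * (\<Prod>i\<le>k. x ((c # s) ! i)))" for k
  have f0: "f 0 = x c * (if s = [] then 1 else if \<rho> (hd s) < \<rho> c then P * x c else 1) / (1 - P * x c)"
    unfolding f_def by (cases s) auto
  have fS: "f (Suc k) = x (s ! k) *
      (if Suc k < length s \<and> \<rho> (s ! Suc k) < \<rho> (s ! k) then (P * x c) * (\<Prod>i\<le>k. x (s ! i)) else 1)
      / (1 - (P * x c) * (\<Prod>i\<le>k. x (s ! i)))" for k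
    unfolding f_def prod.atMost_Suc_shift by (simp add: mult.assoc)
  have "(\<Prod>k<length (c # s). f k) = f 0 * (\<Prod>k<length s. f (Suc k))"
    unfolding length_Cons prod.lessThan_Suc_shift ..
  also have "\<dots> = cf \<rho> x P (c # s)"
    unfolding f0 fS cf_Cons_gen[of \<rho> x P c s] Cons.IH[of "P * x c"] ..
  finally show ?case unfolding f_def by simp
qed

lemma desc_prod:
  fixes x :: "nat \<Rightarrow> complex" and m :: nat and \<sigma> :: "nat \<Rightarrow> nat"
  defines "J \<equiv> {j. Suc j < m \<and> \<sigma> (Suc j) < \<sigma> j}"
  shows "(\<Prod>k<m. x (\<sigma> k) ^ descents_from m \<sigma> k) = (\<Prod>k<m. if k \<in> J then (\<Prod>i\<le>k. x (\<sigma> i)) else 1)"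
proof -
  have finJ: "finite J" "J \<subseteq> {..<m}" unfolding J_def by (auto intro: finite_subset[of _ "{..<m}"])
  have d: "descents_from m \<sigma> k = card {j \<in> J. k \<le> j}" for k
    unfolding descents_from_def J_def by (rule arg_cong[where f = card]) auto
  have "(\<Prod>k<m. x (\<sigma> k) ^ descents_from m \<sigma> k) = (\<Prod>k<m. \<Prod>j\<in>{j \<in> J. k \<le> j}. x (\<sigma> k))"
    unfolding d by simp
  also have "\<dots> = (\<Prod>j\<in>J. \<Prod>k\<in>{k \<in> {..<m}. k \<le> j}. x (\<sigma> k))"
    by (rule prod.swap_restrict) (use finJ in auto)
  also have "\<dots> = (\<Prod>j\<in>J. \<Prod>k\<le>j. x (\<sigma> k))"
  proof (rule prod.cong[OF refl])
    fix j assume "j \<in> J"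
    then have "{k \<in> {..<m}. k \<le> j} = {..j}" using finJ by auto
    then show "(\<Prod>k\<in>{k \<in> {..<m}. k \<le> j}. x (\<sigma> k)) = (\<Prod>k\<le>j. x (\<sigma> k))" by simp
  qed
  also have "\<dots> = (\<Prod>j\<in>{..<m} \<inter> J. \<Prod>k\<le>j. x (\<sigma> k))"
    using finJ by (simp add: Int_absorb1)
  also have "\<dots> = (\<Prod>k<m. if k \<in> J then (\<Prod>i\<le>k. x (\<sigma> i)) else 1)"
    by (rule prod.inter_restrict) simp
  finally show ?thesis .
qed

lemma coef_eq:
  fixes x :: "nat \<Rightarrow> complex"
  shows "(\<Prod>k<m. x (\<sigma> k) ^ (descents_from m \<sigma> k + 1) / (1 - (\<Prod>i\<le>k. x (\<sigma> i))))
       = cf id x 1 (map \<sigma> [0..<m])"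
proof -
  define J where "J = {j. Suc j < m \<and> \<sigma> (Suc j) < \<sigma> j}"
  have "cf id x 1 (map \<sigma> [0..<m]) = (\<Prod>k<m. x (\<sigma> k) * (if k \<in> J then (\<Prod>i\<le>k. x (\<sigma> i)) else 1)
          / (1 - (\<Prod>i\<le>k. x (\<sigma> i))))"
    unfolding cf_prod length_map length_upt diff_zero
  proof (rule prod.cong[OF refl])
    fix k assume k: "k \<in> {..<m}"
    have p: "(\<Prod>i\<le>k. x (map \<sigma> [0..<m] ! i)) = (\<Prod>i\<le>k. x (\<sigma> i))"
      by (rule prod.cong[OF refl]) (use k in auto)
    show "x (map \<sigma> [0..<m] ! k) * (if Suc k < m \<and> id (map \<sigma> [0..<m] ! Suc k) < id (map \<sigma> [0..<m] ! k)
           then 1 * (\<Prod>i\<le>k. x (map \<sigma> [0..<m] ! i)) else 1) / (1 - 1 * (\<Prod>i\<le>k. x (map \<sigma> [0..<m] ! i))) =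
          x (\<sigma> k) * (if k \<in> J then (\<Prod>i\<le>k. x (\<sigma> i)) else 1) / (1 - (\<Prod>i\<le>k. x (\<sigma> i)))"
      unfolding p using k by (auto simp: J_def)
  qed
  also have "\<dots> = (\<Prod>k<m. x (\<sigma> k) / (1 - (\<Prod>i\<le>k. x (\<sigma> i)))) * (\<Prod>k<m. if k \<in> J then (\<Prod>i\<le>k. x (\<sigma> i)) else 1)"
    by (simp add: prod.distrib[symmetric])
  also have "\<dots> = (\<Prod>k<m. x (\<sigma> k) / (1 - (\<Prod>i\<le>k. x (\<sigma> i)))) * (\<Prod>k<m. x (\<sigma> k) ^ descents_from m \<sigma> k)"
    unfolding desc_prod J_def ..
  also have "\<dots> = (\<Prod>k<m. x (\<sigma> k) ^ (descents_from m \<sigma> k + 1) / (1 - (\<Prod>i\<le>k. x (\<sigma> i))))"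
    by (simp add: prod.distrib[symmetric])
  finally show ?thesis ..
qed

lemma AX_conv:
  fixes su :: "complex \<Rightarrow> 'u::ring_1 \<Rightarrow> 'u" and \<iota> :: "'g \<Rightarrow> 'u"
  assumes len: "length ws = m" and hx: "\<forall>k<m. Xw (fst (ws ! k)) lam = xf k"
    and hy: "\<forall>k<m. \<iota> (snd (ws ! k)) = yf k"
  shows "AX su \<iota> lam ws = (\<Sum>s\<in>PS {..<m}. su (cf id xf 1 s) (py yf s))"
  unfolding AX_def len
proof (rule sum.reindex_bij_witness[where j = "\<lambda>\<sigma>. map \<sigma> [0..<m]" and i = "\<lambda>s k. if k < m then s ! k else k"])
  fix \<sigma> assume "\<sigma> \<in> {\<sigma>. \<sigma> permutes {..<m}}"
  then have p: "\<sigma> permutes {..<m}" by simp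
  show "(\<lambda>k. if k < m then map \<sigma> [0..<m] ! k else k) = \<sigma>"
  proof
    fix k show "(if k < m then map \<sigma> [0..<m] ! k else k) = \<sigma> k"
      using permutes_not_in[OF p, of k] by auto
  qed
  show "map \<sigma> [0..<m] \<in> PS {..<m}"
    unfolding PS_def using permutes_inj_on[OF p] permutes_image[OF p]
    by (simp add: distinct_map atLeast0LessThan)
  have sk: "\<sigma> k < m" if "k < m" for k using permutes_in_image[OF p] that by auto
  have c: "(\<Prod>k<m. Xw (fst (ws ! \<sigma> k)) lam ^ (descents_from m \<sigma> k + 1) / (1 - (\<Prod>i\<le>k. Xw (fst (ws ! \<sigma> i)) lam)))
         = (\<Prod>k<m. xf (\<sigma> k) ^ (descents_from m \<sigma> k + 1) / (1 - (\<Prod>i\<le>k. xf (\<sigma> i))))"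
  proof (rule prod.cong[OF refl])
    fix k assume k: "k \<in> {..<m}"
    have "(\<Prod>i\<le>k. Xw (fst (ws ! \<sigma> i)) lam) = (\<Prod>i\<le>k. xf (\<sigma> i))"
      by (rule prod.cong[OF refl]) (use k sk hx in auto)
    then show "Xw (fst (ws ! \<sigma> k)) lam ^ (descents_from m \<sigma> k + 1) / (1 - (\<Prod>i\<le>k. Xw (fst (ws ! \<sigma> i)) lam))
         = xf (\<sigma> k) ^ (descents_from m \<sigma> k + 1) / (1 - (\<Prod>i\<le>k. xf (\<sigma> i)))"
      using k sk hx by auto
  qed
  have w: "map (\<lambda>k. \<iota> (snd (ws ! \<sigma> k))) [0..<m] = map yf (map \<sigma> [0..<m])"
    using sk hy by auto
  show "su (cf id xf 1 (map \<sigma> [0..<m])) (py yf (map \<sigma> [0..<m])) = AX_sigma su \<iota> lam ws \<sigma>"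
  proof -
    have cc: "cf id (\<lambda>k. Xw (fst (ws ! k)) lam) 1 (map \<sigma> [0..<m]) = cf id xf 1 (map \<sigma> [0..<m])"
      by (rule cf_cong) (use sk hx in auto)
    show ?thesis unfolding AX_sigma_def Let_def len w coef_eq py_def cc ..
  qed
next
  fix s assume "s \<in> PS {..<m}"
  then have s: "distinct s" "set s = {..<m}" by (auto simp: PS_def)
  have ls: "length s = m" using distinct_card[OF s(1)] s(2) by simp
  show "map (\<lambda>k. if k < m then s ! k else k) [0..<m] = s"
    by (rule nth_equalityI) (auto simp: ls)
  have "bij_betw (\<lambda>k. if k < m then s ! k else k) {..<m} {..<m}"
    unfolding bij_betw_def
  proof
    show "inj_on (\<lambda>k. if k < m then s ! k else k) {..<m}"
      unfolding inj_on_def using nth_eq_iff_index_eq[OF s(1)] ls by auto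
    have "(\<lambda>k. if k < m then s ! k else k) ` {..<m} = (\<lambda>k. s ! k) ` {..<m}" by auto
    also have "\<dots> = set s" using ls by (auto simp: set_conv_nth)
    finally show "(\<lambda>k. if k < m then s ! k else k) ` {..<m} = {..<m}" using s(2) by simp
  qed
  then show "(\<lambda>k. if k < m then s ! k else k) \<in> {\<sigma>. \<sigma> permutes {..<m}}"
    by (auto intro!: bij_imp_permutes split: if_splits)
qed



lemma Xw_sum: "finite S \<Longrightarrow> Xw (\<lambda>t. \<Sum>k\<in>S. \<beta> k t) lam = (\<Prod>k\<in>S. Xw (\<beta> k) lam)"
  unfolding Xw_def by (simp add: sum_distrib_left exp_sum)

lemma Xw_add: "Xw (\<lambda>t. \<beta>1 t + \<beta>2 t) lam = Xw \<beta>1 lam * Xw \<beta>2 lam"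
  unfolding Xw_def by (simp add: distrib_left exp_add[symmetric])

lemma reindex_tr:
  fixes su :: "complex \<Rightarrow> 'u::ring_1 \<Rightarrow> 'u"
  assumes "Suc l < m"
  shows "(\<Sum>s\<in>PS {..<m}. su (cf id (\<lambda>k. x (tr l k)) 1 s) (py (\<lambda>k. y (tr l k)) s))
       = (\<Sum>s\<in>PS {..<m}. su (cf (tr l) x 1 s) (py y s))"
proof -
  have p: "tr l permutes {..<m}" using assms by (intro permutes_swap_id) auto
  have 1: "map (tr l) (map (tr l) s) = s" for s by (simp add: map_idI)
  have 2: "map (tr l) s \<in> PS {..<m}" if s: "s \<in> PS {..<m}" for s
    using s permutes_inj_on[OF p] permutes_image[OF p] unfolding PS_def
    by (auto simp: distinct_map intro: inj_on_subset)
  have 3: "su (cf id (\<lambda>k. x (tr l k)) 1 (map (tr l) s)) (py (\<lambda>k. y (tr l k)) (map (tr l) s))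
      = su (cf (tr l) x 1 s) (py y s)" for s
  proof -
    have "cf id (\<lambda>k. x (tr l k)) 1 (map (tr l) s) = cf (tr l) x 1 s"
      unfolding cf_map' by (simp add: comp_def)
    moreover have "py (\<lambda>k. y (tr l k)) (map (tr l) s) = py y s"
      unfolding py_def by (simp add: comp_def)
    ultimately show ?thesis by simp
  qed
  have 4: "su (cf (tr l) x 1 (map (tr l) s)) (py y (map (tr l) s))
      = su (cf id (\<lambda>k. x (tr l k)) 1 s) (py (\<lambda>k. y (tr l k)) s)" for s
    using 3[of "map (tr l) s"] unfolding 1 by simp
  show ?thesis
    apply (rule sum.reindex_bij_witness[where j = "map (tr l)" and i = "map (tr l)"])
    using 1 2 4 apply simp_all
    done
qed

lemma reindex_e:
  fixes su :: "complex \<Rightarrow> 'u::ring_1 \<Rightarrow> 'u" and x' :: "nat \<Rightarrow> complex" and y' :: "nat \<Rightarrow> 'u"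
  assumes lm: "Suc l < m"
  shows "(\<Sum>s\<in>PS {..<m-1}. su (cf id (\<lambda>k. x' (if k \<le> l then k else Suc k)) 1 s)
              (py (\<lambda>k. y' (if k \<le> l then k else Suc k)) s))
       = (\<Sum>s\<in>PS ({..<m} - {Suc l}). su (cf id x' 1 s) (py y' s))"
proof -
  define e where "e k = (if k \<le> l then k else Suc k)" for k
  define e' where "e' k = (if k \<le> l then k else k - 1)" for k
  have ee: "e' (e k) = k" for k by (simp add: e_def e'_def)
  have ee': "e (e' k) = k" if "k \<noteq> Suc l" for k using that by (auto simp: e_def e'_def)
  have inje: "inj e" by (metis ee injI)
  have mono: "(e d < e c) = (d < c)" for c d by (auto simp: e_def)
  have ime: "e ` {..<m-1} = {..<m} - {Suc l}"
  proof
    show "e ` {..<m-1} \<subseteq> {..<m} - {Suc l}" using lm by (auto simp: e_def)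
    show "{..<m} - {Suc l} \<subseteq> e ` {..<m-1}"
    proof
      fix k assume k: "k \<in> {..<m} - {Suc l}"
      then have "e' k \<in> {..<m-1}" using lm by (auto simp: e'_def)
      then show "k \<in> e ` {..<m-1}" using ee' k by (metis DiffE image_eqI singletonI)
    qed
  qed
  have 1: "map e' (map e s) = s" for s by (simp add: ee map_idI)
  have 2: "map e s \<in> PS ({..<m} - {Suc l})" if "s \<in> PS {..<m-1}" for s
    using that inje ime unfolding PS_def by (auto simp: distinct_map intro: inj_on_subset)
  have 3: "map e (map e' s) = s" if "s \<in> PS ({..<m} - {Suc l})" for s
    using that ee' unfolding PS_def by (auto intro: map_idI)
  have 4: "map e' s \<in> PS {..<m-1}" if "s \<in> PS ({..<m} - {Suc l})" for s
  proof -
    have s: "distinct s" "set s = {..<m} - {Suc l}" using that by (auto simp: PS_def)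
    have "inj_on e' (set s)" by (rule inj_on_inverseI[where g = e]) (use s ee' in auto)
    moreover have "e' ` (set s) = e' ` e ` {..<m-1}" using s ime by simp
    then have "e' ` (set s) = {..<m-1}" by (simp add: image_image ee)
    ultimately show ?thesis using s unfolding PS_def by (simp add: distinct_map)
  qed
  have 5: "su (cf id x' 1 (map e s)) (py y' (map e s))
      = su (cf id (\<lambda>k. x' (e k)) 1 s) (py (\<lambda>k. y' (e k)) s)" for s
  proof -
    have "cf id x' 1 (map e s) = cf (id \<circ> e) (x' \<circ> e) 1 s" by (rule cf_map')
    also have "\<dots> = cf id (\<lambda>k. x' (e k)) 1 s" by (rule cf_cong) (auto simp: mono)
    finally show ?thesis unfolding py_def by (simp add: comp_def)
  qed
  show ?thesis unfolding e_def[symmetric]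
    apply (rule sum.reindex_bij_witness[where j = "map e" and i = "map e'"])
    using 1 2 3 4 5 apply simp_all
    done
qed



theorem lemma4p5:
  fixes sc :: "complex \<Rightarrow> 'g::ab_group_add \<Rightarrow> 'g" and br :: "'g \<Rightarrow> 'g \<Rightarrow> 'g"
    and h :: "'g set" and al :: "nat \<Rightarrow> 'g \<Rightarrow> complex" and r :: nat
    and su :: "complex \<Rightarrow> 'u::ring_1 \<Rightarrow> 'u" and \<iota> :: "'g \<Rightarrow> 'u"
    and m l :: nat and \<beta> :: "nat \<Rightarrow> 'g \<Rightarrow> complex" and F :: "nat \<Rightarrow> 'g" and lam :: 'g
  assumes "simple_lie_algebra sc br"
    and "cartan_subalgebra sc br h"
    and "simple_roots sc br h al r"
    and "complex_assoc_algebra su"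
    and "lie_hom_into sc br (n_minus sc br h al r) su \<iota>"
    and "m \<ge> 2" and "Suc l < m"
    and "\<forall>k<m. pos_root sc br h al r (\<beta> k)"
    and "\<forall>k<m. F k \<in> root_space sc br h (\<lambda>t. - \<beta> k t)"
    and "lam \<in> h"
    and "\<forall>S. S \<subseteq> {..<m} \<and> S \<noteq> {} \<longrightarrow> Xw (\<lambda>t. \<Sum>k\<in>S. \<beta> k t) lam \<noteq> 1"
  shows "AX su \<iota> lam (map (\<lambda>k. (\<beta> k, F k)) [0..<m])
         - AX su \<iota> lam (map (\<lambda>k. (\<beta> (Transposition.transpose l (Suc l) k), F (Transposition.transpose l (Suc l) k))) [0..<m])
         = AX su \<iota> lam (map (\<lambda>k. (\<beta> k, F k)) [0..<l]
              @ [(\<lambda>t. \<beta> l t + \<beta> (Suc l) t, br (F l) (F (Suc l)))]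
              @ map (\<lambda>k. (\<beta> k, F k)) [Suc (Suc l)..<m])"
proof -
  note lm = \<open>Suc l < m\<close>
  define x where "x k = Xw (\<beta> k) lam" for k
  define y where "y k = \<iota> (F k)" for k
  define x' where "x' = x(l := x l * x (Suc l))"
  define y' where "y' = y(l := y l * y (Suc l) - y (Suc l) * y l)"
  have VSu: "vector_space su" using assms(4) by (simp add: complex_assoc_algebra_def)
  have VSc: "vector_space sc" using assms(1) by (simp add: simple_lie_algebra_def lie_algebra_def)
  interpret VS: vector_space sc by (rule VSc)
  have inN: "F k \<in> n_minus sc br h al r" if "k < m" for k
    unfolding n_minus_def
    by (rule VS.span_base) (use that assms(8,9) in blast)
  have brF: "\<iota> (br (F l) (F (Suc l))) = y l * y (Suc l) - y (Suc l) * y l"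
    using assms(5) inN[of l] inN[of "Suc l"] lm unfolding lie_hom_into_def y_def by auto
  have A1: "AX su \<iota> lam (map (\<lambda>k. (\<beta> k, F k)) [0..<m]) = (\<Sum>s\<in>PS {..<m}. su (cf id x 1 s) (py y s))"
    by (rule AX_conv) (auto simp: x_def y_def)
  have A2: "AX su \<iota> lam (map (\<lambda>k. (\<beta> (tr l k), F (tr l k))) [0..<m])
      = (\<Sum>s\<in>PS {..<m}. su (cf (tr l) x 1 s) (py y s))"
  proof -
    have "AX su \<iota> lam (map (\<lambda>k. (\<beta> (tr l k), F (tr l k))) [0..<m])
        = (\<Sum>s\<in>PS {..<m}. su (cf id (\<lambda>k. x (tr l k)) 1 s) (py (\<lambda>k. y (tr l k)) s))"
      by (rule AX_conv) (auto simp: x_def y_def)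
    also have "\<dots> = (\<Sum>s\<in>PS {..<m}. su (cf (tr l) x 1 s) (py y s))"
      by (rule reindex_tr[OF lm])
    finally show ?thesis .
  qed
  have A3: "AX su \<iota> lam (map (\<lambda>k. (\<beta> k, F k)) [0..<l]
              @ [(\<lambda>t. \<beta> l t + \<beta> (Suc l) t, br (F l) (F (Suc l)))]
              @ map (\<lambda>k. (\<beta> k, F k)) [Suc (Suc l)..<m])
      = (\<Sum>s\<in>PS ({..<m} - {Suc l}). su (cf id x' 1 s) (py y' s))"
  proof -
    let ?ws = "map (\<lambda>k. (\<beta> k, F k)) [0..<l]
              @ [(\<lambda>t. \<beta> l t + \<beta> (Suc l) t, br (F l) (F (Suc l)))]
              @ map (\<lambda>k. (\<beta> k, F k)) [Suc (Suc l)..<m]"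
    have len: "length ?ws = m - 1" using lm by simp
    have nth: "?ws ! k = (if k < l then (\<beta> k, F k) else if k = l then
        (\<lambda>t. \<beta> l t + \<beta> (Suc l) t, br (F l) (F (Suc l))) else (\<beta> (Suc k), F (Suc k)))"
      if "k < m - 1" for k
      using that lm by (auto simp: nth_append)
    have "AX su \<iota> lam ?ws = (\<Sum>s\<in>PS {..<m-1}. su (cf id (\<lambda>k. x' (if k \<le> l then k else Suc k)) 1 s)
              (py (\<lambda>k. y' (if k \<le> l then k else Suc k)) s))"
      by (rule AX_conv[OF len]; intro allI impI; simp only: nth; auto simp: x'_def y'_def x_def y_def Xw_add brF)
    also have "\<dots> = (\<Sum>s\<in>PS ({..<m} - {Suc l}). su (cf id x' 1 s) (py y' s))"
      by (rule reindex_e[OF lm])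
    finally show ?thesis .
  qed
  have nz: "\<forall>S. S \<subseteq> {..<m} \<and> S \<noteq> {} \<longrightarrow> (\<Prod>k\<in>S. x k) \<noteq> 1"
  proof (intro allI impI)
    fix S :: "nat set" assume S: "S \<subseteq> {..<m} \<and> S \<noteq> {}"
    then have "finite S" using finite_subset by blast
    moreover have "Xw (\<lambda>t. \<Sum>k\<in>S. \<beta> k t) lam \<noteq> 1" using assms(11) S by blast
    ultimately show "(\<Prod>k\<in>S. x k) \<noteq> 1" unfolding x_def using Xw_sum[of S \<beta> lam] by simp
  qed
  show ?thesis
    unfolding A1 A2 A3 x'_def y'_def by (rule sum_main[OF VSu lm nz])
qed

end
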